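(* Let $B$ be an $(n,n-1)$-blocker for a convex $n$-gon with vertices $0,\dots,n-1$ (indices mod $n$). If the ear-cover $(i-1,i+1)$ does not belong to $B$, then $\deg_B(i)\le 2$.
   Context: An edge $(i,j)$ is the segment between vertices $i,j$; boundary edges are $(i,i+1)$, diagonals are the other edges. Two edges cross if they share an interior point. A triangulation is a maximal set of pairwise non-crossing diagonals. A blocker is a set $B$ of diagonals having a diagonal in common with every triangulation; it is saturated if for every $e\in B$, $B\setminus\{e\}$ is not a blocker. An $(n,k)$-blocker is a saturated blocker of size $k$ for a convex $n$-gon. The diagonal $(i-1,i+1)$ is the ear-cover covering $i$. $\deg_B(i)$ is the number of edges of $B$ incident to $i$. *)

theory Defs
  imports Main
begin

text \<open>Convex n-gon with vertices 0,...,n-1 (indices mod n). An edge is the unordered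
pair of its endpoints, represented as a two-element set of naturals.\<close>

definition diagonal :: "nat \<Rightarrow> nat set \<Rightarrow> bool" where
  "diagonal n e \<longleftrightarrow> (\<exists>a b. e = {a, b} \<and> a < n \<and> b < n \<and> a \<noteq> b
      \<and> b \<noteq> (a + 1) mod n \<and> a \<noteq> (b + 1) mod n)"

text \<open>For vertices in convex position, two edges with four distinct endpoints
share an interior point iff their endpoints interleave in the cyclic order.\<close>
definition interleave :: "nat set \<Rightarrow> nat set \<Rightarrow> bool" where
  "interleave e f \<longleftrightarrow> (\<exists>a b c d. e = {a, b} \<and> f = {c, d} \<and> a < c \<and> c < b \<and> b < d)"

definition crosses :: "nat set \<Rightarrow> nat set \<Rightarrow> bool" where
  "crosses e f \<longleftrightarrow> interleave e f \<or> interleave f e"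

definition triangulation :: "nat \<Rightarrow> nat set set \<Rightarrow> bool" where
  "triangulation n T \<longleftrightarrow>
     (\<forall>e\<in>T. diagonal n e) \<and>
     (\<forall>e\<in>T. \<forall>f\<in>T. \<not> crosses e f) \<and>
     (\<forall>e. diagonal n e \<and> e \<notin> T \<longrightarrow> (\<exists>f\<in>T. crosses e f))"

definition blocker :: "nat \<Rightarrow> nat set set \<Rightarrow> bool" where
  "blocker n B \<longleftrightarrow> (\<forall>e\<in>B. diagonal n e) \<and>
     (\<forall>T. triangulation n T \<longrightarrow> B \<inter> T \<noteq> {})"

definition saturated_blocker :: "nat \<Rightarrow> nat set set \<Rightarrow> bool" where
  "saturated_blocker n B \<longleftrightarrow> blocker n B \<and> (\<forall>e\<in>B. \<not> blocker n (B - {e}))"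

definition nk_blocker :: "nat \<Rightarrow> nat \<Rightarrow> nat set set \<Rightarrow> bool" where
  "nk_blocker n k B \<longleftrightarrow> saturated_blocker n B \<and> finite B \<and> card B = k"

definition ear_cover :: "nat \<Rightarrow> nat \<Rightarrow> nat set" where
  "ear_cover n i = {(i + n - 1) mod n, (i + 1) mod n}"

definition deg :: "nat set set \<Rightarrow> nat \<Rightarrow> nat" where
  "deg B i = card {e \<in> B. i \<in> e}"

end

theory Submission
  imports Defs
begin

definition dS :: "nat set \<Rightarrow> nat set \<Rightarrow> bool" where
  "dS S e \<longleftrightarrow> (\<exists>a b. e = {a,b} \<and> a \<in> S \<and> b \<in> S \<and> a < b \<and> (\<exists>c\<in>S. a < c \<and> c < b) \<and> (\<exists>c\<in>S. c < a \<or> b < c))"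

definition triS :: "nat set \<Rightarrow> nat set set \<Rightarrow> bool" where
  "triS S T \<longleftrightarrow> (\<forall>e\<in>T. dS S e) \<and> (\<forall>e\<in>T. \<forall>f\<in>T. \<not> crosses e f) \<and>
     (\<forall>e. dS S e \<and> e \<notin> T \<longrightarrow> (\<exists>f\<in>T. crosses e f))"

definition prv :: "nat set \<Rightarrow> nat \<Rightarrow> nat" where
  "prv S v = (if \<exists>x\<in>S. x < v then Max {x\<in>S. x < v} else Max S)"

definition nxt :: "nat set \<Rightarrow> nat \<Rightarrow> nat" where
  "nxt S v = (if \<exists>x\<in>S. v < x then Min {x\<in>S. v < x} else Min S)"

definition earS :: "nat set \<Rightarrow> nat \<Rightarrow> nat set" where
  "earS S v = {prv S v, nxt S v}"

theorem mainTheorem11: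
  fixes n i :: nat and B :: "nat set set"
  assumes "n \<ge> 3"
    and "nk_blocker n (n - 1) B"
    and "i < n"
    and "ear_cover n i \<notin> B"
  shows "deg B i \<le> 2"
proof -
  have interleave_iff: "interleave {a,b} {c,d} \<longleftrightarrow> (a<c \<and> c<b \<and> b<d) \<or> (b<c \<and> c<a \<and> a<d) \<or> (a<d \<and> d<b \<and> b<c) \<or> (b<d \<and> d<a \<and> a<c)"
    for a b c d
    unfolding interleave_def
    apply (rule iffI)
     apply (auto simp: doubleton_eq_iff)[1]
    apply (elim disjE)
       apply (rule exI[of _ a], rule exI[of _ b], rule exI[of _ c], rule exI[of _ d], simp)
      apply (rule exI[of _ b], rule exI[of _ a], rule exI[of _ c], rule exI[of _ d], simp add: insert_commute)
     apply (rule exI[of _ a], rule exI[of _ b], rule exI[of _ d], rule exI[of _ c], simp add: insert_commute)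
    apply (rule exI[of _ b], rule exI[of _ a], rule exI[of _ d], rule exI[of _ c], simp add: insert_commute)
    done

  have crosses_iff: "crosses {a,b} {c,d} \<longleftrightarrow> (a<c \<and> c<b \<and> b<d) \<or> (b<c \<and> c<a \<and> a<d) \<or> (a<d \<and> d<b \<and> b<c) \<or> (b<d \<and> d<a \<and> a<c)
     \<or> (c<a \<and> a<d \<and> d<b) \<or> (d<a \<and> a<c \<and> c<b) \<or> (c<b \<and> b<d \<and> d<a) \<or> (d<b \<and> b<c \<and> c<a)"
    for a b c d
    unfolding crosses_def interleave_iff by auto

  have crosses_sym: "crosses e f = crosses f e"
    for e f
    unfolding crosses_def by auto

  have crosses_self: "\<not> crosses e e"
    for e
    unfolding crosses_def interleave_def by (auto simp: doubleton_eq_iff)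

  have prv_lt: "finite S \<Longrightarrow> x \<in> S \<Longrightarrow> x < v \<Longrightarrow> prv S v \<in> S \<and> prv S v < v \<and> (\<forall>y\<in>S. y < v \<longrightarrow> y \<le> prv S v)"
    for S x v
  proof -
    assume a: "finite S" "x \<in> S" "x < v"
    have f: "finite {x\<in>S. x < v}" "{x\<in>S. x < v} \<noteq> {}" using a by auto
    have "prv S v = Max {x\<in>S. x < v}" using a unfolding prv_def by auto
    then show ?thesis using Max_in[OF f] Max_ge[OF f(1)] by auto
  qed

  have prv_min: "finite S \<Longrightarrow> v \<in> S \<Longrightarrow> \<not>(\<exists>x\<in>S. x < v) \<Longrightarrow> prv S v \<in> S \<and> (\<forall>y\<in>S. y \<le> prv S v)"
    for S v
  proof -
    assume a: "finite S" "v \<in> S" "\<not>(\<exists>x\<in>S. x < v)"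
    have "prv S v = Max S" using a unfolding prv_def by auto
    moreover have "S \<noteq> {}" using a by auto
    ultimately show ?thesis using a Max_in[of S] Max_ge[of S] by auto
  qed

  have nxt_gt: "finite S \<Longrightarrow> x \<in> S \<Longrightarrow> v < x \<Longrightarrow> nxt S v \<in> S \<and> v < nxt S v \<and> (\<forall>y\<in>S. v < y \<longrightarrow> nxt S v \<le> y)"
    for S x v
  proof -
    assume a: "finite S" "x \<in> S" "v < x"
    have f: "finite {x\<in>S. v < x}" "{x\<in>S. v < x} \<noteq> {}" using a by auto
    have "nxt S v = Min {x\<in>S. v < x}" using a unfolding nxt_def by auto
    then show ?thesis using Min_in[OF f] Min_le[OF f(1)] by auto
  qed

  have nxt_max: "finite S \<Longrightarrow> v \<in> S \<Longrightarrow> \<not>(\<exists>x\<in>S. v < x) \<Longrightarrow> nxt S v \<in> S \<and> (\<forall>y\<in>S. nxt S v \<le> y)"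
    for S v
  proof -
    assume a: "finite S" "v \<in> S" "\<not>(\<exists>x\<in>S. v < x)"
    have "nxt S v = Min S" using a unfolding nxt_def by auto
    moreover have "S \<noteq> {}" using a by auto
    ultimately show ?thesis using a Min_in[of S] Min_le[of S] by auto
  qed

  have nocross1: "a < b \<Longrightarrow> c \<le> a \<or> b \<le> c \<Longrightarrow> d \<le> a \<or> b \<le> d \<Longrightarrow> \<not> crosses {a,b} {c,d}"
    for a b c d
    unfolding crosses_iff by auto

  have nocross2: "a \<le> c \<Longrightarrow> c \<le> b \<Longrightarrow> a \<le> d \<Longrightarrow> d \<le> b \<Longrightarrow> \<not> crosses {a,b} {c,d}"
    for a b c d
    unfolding crosses_iff by auto

  have crI: "a<c \<Longrightarrow> c<b \<Longrightarrow> b<d \<Longrightarrow> crosses {a,b} {c,d}"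
    for a b c d
    unfolding crosses_iff by auto

  have ear_nocross: "\<not> crosses (earS S v) {c,d}"
    if fin: "finite S" and v: "v \<in> S" and c: "c \<in> S" "c \<noteq> v" and d: "d \<in> S" "d \<noteq> v"
    for S v c d
  proof (cases "\<exists>x\<in>S. x < v")
    case True
    then obtain x where x: "x\<in>S" "x<v" by auto
    note P = prv_lt[OF fin x]
    show ?thesis
    proof (cases "\<exists>y\<in>S. v < y")
      case True
      then obtain y where y: "y\<in>S" "v<y" by auto
      note N = nxt_gt[OF fin y]
      have "c \<le> prv S v \<or> nxt S v \<le> c" using P N c by (meson linorder_neqE_nat)
      moreover have "d \<le> prv S v \<or> nxt S v \<le> d" using P N d by (meson linorder_neqE_nat)
      moreover have "prv S v < nxt S v" using P N by auto
      ultimately show ?thesis unfolding earS_def using nocross1 by blast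
    next
      case False
      note N = nxt_max[OF fin v False]
      have "c \<le> prv S v" "d \<le> prv S v" using P c d False by (meson linorder_neqE_nat)+
      moreover have "nxt S v \<le> c" "nxt S v \<le> d" using N c d by auto
      ultimately show ?thesis unfolding earS_def using nocross2 crosses_sym insert_commute by metis
    qed
  next
    case False
    note P = prv_min[OF fin v False]
    have cv: "v < c" "v < d" using False c d by (meson linorder_neqE_nat)+
    note N = nxt_gt[OF fin c(1) cv(1)]
    have "nxt S v \<le> c" "nxt S v \<le> d" using N c d cv by auto
    moreover have "c \<le> prv S v" "d \<le> prv S v" using P c d by auto
    ultimately show ?thesis unfolding earS_def using nocross2 crosses_sym insert_commute by metis
  qed

  have dS_cross_ear: "crosses f (earS S v)"
    if fin: "finite S" and v: "v \<in> S" and f: "dS S f" and vf: "v \<in> f"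
    for S v f
  proof -
    obtain a b c w where ab: "f = {a,b}" "a\<in>S" "b\<in>S" "a<b" and c: "c\<in>S" "a<c" "c<b"
      and w: "w\<in>S" "w<a \<or> b<w"
      using f unfolding dS_def by blast
    show ?thesis
    proof (cases "\<exists>x\<in>S. x < v")
      case True
      then obtain x where x: "x\<in>S" "x<v" by auto
      note P = prv_lt[OF fin x]
      show ?thesis
      proof (cases "\<exists>y\<in>S. v < y")
        case True
        then obtain y where y: "y\<in>S" "v<y" by auto
        note N = nxt_gt[OF fin y]
        show ?thesis
        proof (cases "v = a")
          case True
          have "nxt S v \<le> c" using N c True by auto
          then have "crosses {prv S v, nxt S v} {a,b}" using P N True c by (intro crI) auto
          then show ?thesis unfolding ab earS_def using crosses_sym by auto
        next
          case False
          then have vb: "v = b" using vf ab by auto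
          have "c \<le> prv S v" using P c vb by auto
          then have "crosses {a,b} {prv S v, nxt S v}" using P N vb c by (intro crI) auto
          then show ?thesis unfolding ab earS_def by auto
        qed
      next
        case False
        note N = nxt_max[OF fin v False]
        have vb: "v = b" using vf ab False by auto
        have "c \<le> prv S v" using P c vb by auto
        moreover have "w < a" using w False vb by auto
        moreover have "nxt S v \<le> w" using N w by auto
        ultimately have "crosses {nxt S v, prv S v} {a,b}" using P vb c by (intro crI) auto
        then show ?thesis unfolding ab earS_def using crosses_sym insert_commute by metis
      qed
    next
      case False
      note P = prv_min[OF fin v False]
      have va: "v = a" using vf ab False by auto
      have cv: "v < c" using c va by auto
      note N = nxt_gt[OF fin c(1) cv]
      have "b < w" using w False va by auto
      moreover have "w \<le> prv S v" using P w by auto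
      ultimately have "crosses {a,b} {nxt S v, prv S v}" using N va c by (intro crI) auto
      then show ?thesis unfolding ab earS_def using insert_commute by metis
    qed
  qed

  have dS_remove: "dS (S - {v}) e"
    if fin: "finite S" and v: "v \<in> S" and e: "dS S e" and ve: "v \<notin> e" and ne: "e \<noteq> earS S v"
    for S v e
  proof -
    obtain a b c w where ab: "e = {a,b}" "a\<in>S" "b\<in>S" "a<b" and c: "c\<in>S" "a<c" "c<b"
      and w: "w\<in>S" "w<a \<or> b<w"
      using e unfolding dS_def by blast
    have av: "a \<noteq> v" "b \<noteq> v" using ve ab by auto
    have inner: "\<exists>c'\<in>S - {v}. a < c' \<and> c' < b"
    proof (cases "c = v")
      case False then show ?thesis using c by auto
    next
      case True
      have av1: "a < v" using c True by simp
      note P = prv_lt[OF fin ab(2) av1]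
      note N = nxt_gt[OF fin ab(3) c(3)[unfolded True]]
      have pa: "a \<le> prv S v" using P ab(2) av1 by blast
      have nb: "nxt S v \<le> b" using N ab(3) c(3) True by blast
      have "\<not> (prv S v = a \<and> nxt S v = b)" using ne ab unfolding earS_def by auto
      then consider "prv S v \<noteq> a" | "nxt S v \<noteq> b" by blast
      then show ?thesis
      proof cases
        case 1
        then have "a < prv S v" "prv S v < b" "prv S v \<noteq> v" using pa P c True by auto
        then show ?thesis using P by blast
      next
        case 2
        then have "a < nxt S v" "nxt S v < b" "nxt S v \<noteq> v" using nb N c True by auto
        then show ?thesis using N by blast
      qed
    qed
    have outer: "\<exists>w'\<in>S - {v}. w' < a \<or> b < w'"
    proof (rule ccontr)
      assume H: "\<not> ?thesis"
      have H': "a \<le> x \<and> x \<le> b" if "x \<in> S" "x \<noteq> v" for x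
      proof -
        have "x \<in> S - {v}" using that by blast
        then have "\<not> (x < a \<or> b < x)" using H by blast
        then show ?thesis by simp
      qed
      have wv: "w = v" using H w by auto
      show False
      proof (cases "v < a")
        case True
        have nx: "\<not> (\<exists>x\<in>S. x < v)" using H' True by fastforce
        note P = prv_min[OF fin v nx]
        note N = nxt_gt[OF fin ab(2) True]
        have p1: "b \<le> prv S v" "prv S v \<in> S" using P ab(3) by blast+
        have "prv S v \<noteq> v" using p1 True ab by auto
        then have p2: "prv S v \<le> b" using H' p1 by blast
        have n1: "nxt S v \<le> a" "nxt S v \<in> S" "v < nxt S v" using N ab(2) True by blast+
        have "nxt S v \<noteq> v" using n1 by auto
        then have n2: "a \<le> nxt S v" using H' n1 by blast
        have "prv S v = b" "nxt S v = a" using p1 p2 n1 n2 by simp_all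
        then show False using ne ab unfolding earS_def by auto
      next
        case False
        then have bv: "b < v" using w wv by auto
        have nx: "\<not> (\<exists>x\<in>S. v < x)" using H' bv by fastforce
        note N = nxt_max[OF fin v nx]
        note P = prv_lt[OF fin ab(3) bv]
        have n1: "nxt S v \<le> a" "nxt S v \<in> S" using N ab(2) by blast+
        have "nxt S v \<noteq> v" using n1 bv ab by auto
        then have n2: "a \<le> nxt S v" using H' n1 by blast
        have p1: "b \<le> prv S v" "prv S v \<in> S" "prv S v < v" using P ab(3) bv by blast+
        have "prv S v \<noteq> v" using p1 by auto
        then have p2: "prv S v \<le> b" using H' p1 by blast
        have "prv S v = b" "nxt S v = a" using p1 p2 n1 n2 by simp_all
        then show False using ne ab unfolding earS_def by auto
      qed
    qed
    show ?thesis unfolding dS_def using ab av inner outer by blast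
  qed

  have dS_mono: "dS S' e \<Longrightarrow> S' \<subseteq> S \<Longrightarrow> dS S e"
    for S' e S
    unfolding dS_def by blast

  have dS_sub: "dS S e \<Longrightarrow> e \<subseteq> S"
    for S e
    unfolding dS_def by blast

  have dS_card: "4 \<le> card S"
    if assms: "finite S" "dS S e"
    for S e
  proof -
    obtain a b c w where ab: "e = {a,b}" "a\<in>S" "b\<in>S" "a<b" and c: "c\<in>S" "a<c" "c<b"
      and w: "w\<in>S" "w<a \<or> b<w"
      using assms unfolding dS_def by blast
    have "card {a,b,c,w} = 4" using ab c w by auto
    moreover have "{a,b,c,w} \<subseteq> S" using ab c w by auto
    ultimately show ?thesis using card_mono[OF assms(1)] by metis
  qed

  have three_elem: "\<exists>x\<in>S. x \<noteq> p \<and> x \<noteq> v \<and> x \<noteq> q"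
    if assms: "finite S" "4 \<le> card S"
    for S p v q
  proof (rule ccontr)
    assume "\<not> ?thesis"
    then have "S \<subseteq> {p,v,q}" by auto
    then have "card S \<le> card {p,v,q}" by (simp add: card_mono)
    also have "\<dots> \<le> 3" by (simp add: card_insert_if)
    finally show False using assms by simp
  qed

  have dS_ear: "dS S (earS S v)"
    if fin: "finite S" and v: "v \<in> S" and c4: "4 \<le> card S"
    for S v
  proof -
    obtain x where x: "x\<in>S" "x \<noteq> prv S v" "x \<noteq> v" "x \<noteq> nxt S v" using three_elem[OF fin c4] by blast
    show ?thesis
    proof (cases "\<exists>x\<in>S. x < v")
      case True
      then obtain x0 where x0: "x0\<in>S" "x0<v" by auto
      note P = prv_lt[OF fin x0]
      show ?thesis
      proof (cases "\<exists>y\<in>S. v < y")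
        case True
        then obtain y where y: "y\<in>S" "v<y" by auto
        note N = nxt_gt[OF fin y]
        have "x < prv S v \<or> nxt S v < x" using P N x by (meson linorder_neqE_nat not_le)
        then show ?thesis unfolding dS_def earS_def using P N v x
          by (intro exI[of _ "prv S v"] exI[of _ "nxt S v"]) auto
      next
        case False
        note N = nxt_max[OF fin v False]
        have "x < v" using x False by auto
        then have "nxt S v < x" "x < prv S v" using P N x by (auto simp: le_less)
        then show ?thesis unfolding dS_def earS_def using P N v x
          by (intro exI[of _ "nxt S v"] exI[of _ "prv S v"]) (auto simp: insert_commute)
      qed
    next
      case False
      note P = prv_min[OF fin v False]
      have xv: "v < x" using x False by auto
      note N = nxt_gt[OF fin x(1) xv]
      have "nxt S v < x" "x < prv S v" using P N x xv by (auto simp: le_less)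
      then show ?thesis unfolding dS_def earS_def using P N v x xv
        by (intro exI[of _ "nxt S v"] exI[of _ "prv S v"]) (auto simp: insert_commute)
    qed
  qed

  have tri_extend: "triS S (insert (earS S v) T')"
    if fin: "finite S" and v: "v \<in> S" and c4: "4 \<le> card S" and T: "triS (S - {v}) T'"
    for S v T'
  proof -
    have T1: "\<And>t. t \<in> T' \<Longrightarrow> dS (S - {v}) t" using T unfolding triS_def by auto
    have T2: "\<And>t u. t \<in> T' \<Longrightarrow> u \<in> T' \<Longrightarrow> \<not> crosses t u" using T unfolding triS_def by auto
    have T3: "\<And>f. dS (S - {v}) f \<Longrightarrow> f \<notin> T' \<Longrightarrow> \<exists>g\<in>T'. crosses f g" using T unfolding triS_def by auto
    have ec: "\<And>t. t \<in> T' \<Longrightarrow> \<not> crosses (earS S v) t"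
    proof -
      fix t assume "t \<in> T'"
      then obtain a b where "t = {a,b}" "a \<in> S - {v}" "b \<in> S - {v}" using T1 unfolding dS_def by blast
      then show "\<not> crosses (earS S v) t" using ear_nocross[OF fin v] by auto
    qed
    show ?thesis unfolding triS_def
    proof (intro conjI ballI allI impI)
      fix e assume "e \<in> insert (earS S v) T'"
      then show "dS S e" using dS_ear[OF fin v c4] T1 dS_mono by blast
    next
      fix e f assume "e \<in> insert (earS S v) T'" "f \<in> insert (earS S v) T'"
      then show "\<not> crosses e f" using ec T2 crosses_self crosses_sym by blast
    next
      fix f assume f: "dS S f \<and> f \<notin> insert (earS S v) T'"
      show "\<exists>g\<in>insert (earS S v) T'. crosses f g"
      proof (cases "v \<in> f")
        case True
        then show ?thesis using dS_cross_ear[OF fin v] f by blast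
      next
        case False
        then have "dS (S - {v}) f" using dS_remove[OF fin v] f by blast
        then show ?thesis using T3 f by blast
      qed
    qed
  qed

  have nxt_in: "nxt S v \<in> S"
    if assms: "finite S" "v \<in> S"
    for S v
  proof (cases "\<exists>x\<in>S. v < x")
    case True
    then obtain x where "x \<in> S" "v < x" by blast
    then show ?thesis using nxt_gt[OF assms(1)] by blast
  next
    case False
    then show ?thesis using nxt_max[OF assms False] by blast
  qed

  have closure_nxt: "U = S"
    if fin: "finite S" and US: "U \<subseteq> S" and Une: "U \<noteq> {}" and cl: "\<And>u. u \<in> U \<Longrightarrow> nxt S u \<in> U"
    for S U
  proof (rule ccontr)
    assume "U \<noteq> S"
    then obtain w where w: "w \<in> S" "w \<notin> U" using US by auto
    have finU: "finite U" using fin US finite_subset by auto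
    have A: "\<not> (\<exists>u\<in>U. u < w)"
    proof
      assume "\<exists>u\<in>U. u < w"
      then have ne: "{u\<in>U. u < w} \<noteq> {}" by auto
      have fu: "finite {u\<in>U. u < w}" using finU by auto
      define u' where "u' = Max {u\<in>U. u < w}"
      have u': "u' \<in> U" "u' < w" using Max_in[OF fu ne] unfolding u'_def by auto
      note N = nxt_gt[OF fin w(1) u'(2)]
      have i1: "nxt S u' \<in> U" using cl u' by auto
      have i2: "nxt S u' \<le> w" using N w(1) u'(2) by auto
      have i3: "nxt S u' \<noteq> w" using w i1 by auto
      from i1 i2 i3 have "nxt S u' \<in> U" "nxt S u' < w" by auto
      then have "nxt S u' \<in> {u\<in>U. u < w}" by blast
      then have "nxt S u' \<le> u'" unfolding u'_def using Max_ge[OF fu] by blast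
      then show False using N by auto
    qed
    define u where "u = Max U"
    have u1: "u \<in> U" using Max_in[OF finU Une] unfolding u_def .
    have u2: "x \<le> u" if "x \<in> U" for x using Max_ge[OF finU that] unfolding u_def .
    show False
    proof (cases "\<exists>x\<in>S. u < x")
      case True
      then obtain x where "x\<in>S" "u<x" by auto
      note N = nxt_gt[OF fin this]
      have "nxt S u \<in> U" using cl u1 by blast
      then have "nxt S u \<le> u" using u2 by blast
      then show False using N by simp
    next
      case False
      note N = nxt_max[OF fin _ False]
      have uS: "u \<in> S" using u1 US by blast
      have i1: "nxt S u \<in> U" using cl u1 by blast
      have i2: "nxt S u \<le> w" using N[OF uS] w(1) by blast
      have "nxt S u \<noteq> w" using i1 w(2) by blast
      then have "nxt S u < w" using i2 by simp
      then show False using A i1 by blast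
    qed
  qed

  have ear_inj: "inj_on (earS S) (S - {Min S, Max S})"
    if fin: "finite S"
    for S
  proof (rule inj_onI)
    fix v w assume v: "v \<in> S - {Min S, Max S}" and w: "w \<in> S - {Min S, Max S}" and eq: "earS S v = earS S w"
    have ne: "S \<noteq> {}" using v by blast
    have props: "prv S x < x \<and> x < nxt S x \<and> (\<forall>y\<in>S. x < y \<longrightarrow> nxt S x \<le> y)" if x: "x \<in> S - {Min S, Max S}" for x
    proof -
      have xS: "x \<in> S" "x \<noteq> Min S" "x \<noteq> Max S" using x by blast+
      have "Min S \<le> x" using Min_le[OF fin xS(1)] .
      then have m: "Min S < x" using xS by simp
      have "x \<le> Max S" using Max_ge[OF fin xS(1)] .
      then have M: "x < Max S" using xS by simp
      show ?thesis using prv_lt[OF fin Min_in[OF fin ne] m] nxt_gt[OF fin Max_in[OF fin ne] M] by blast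
    qed
    note pv = props[OF v] and pw = props[OF w]
    have "prv S v < nxt S v" "prv S w < nxt S w" using pv pw by linarith+
    then have nn: "nxt S v = nxt S w"
      using eq unfolding earS_def doubleton_eq_iff by auto
    have vS: "v \<in> S" "w \<in> S" using v w by blast+
    show "v = w"
    proof (rule linorder_cases[of v w])
      assume "v < w"
      then have "nxt S v \<le> w" using pv vS by blast
      then show ?thesis using pw nn by simp
    next
      assume "w < v"
      then have "nxt S w \<le> v" using pw vS by blast
      then show ?thesis using pv nn by simp
    qed
  qed

  have choose_v: "\<exists>v\<in>S. earS S v \<notin> B \<and> (B = {} \<or> (\<exists>e\<in>B. v \<in> e))"
    if fin: "finite S" and c4: "4 \<le> card S" and BS: "B \<subseteq> Collect (dS S)" and finB: "finite B"
      and cB: "card B + 3 \<le> card S"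
    for S B
  proof (cases "B = {}")
    case True
    have "S \<noteq> {}" using c4 by auto
    then show ?thesis using True by auto
  next
    case False
    show ?thesis
    proof (rule ccontr)
      assume H0: "\<not> ?thesis"
      then have H: "\<And>v. v \<in> S \<Longrightarrow> (\<exists>e\<in>B. v \<in> e) \<Longrightarrow> earS S v \<in> B" using False by blast
      define U where "U = {v\<in>S. \<exists>e\<in>B. v \<in> e}"
      obtain e0 where e0: "e0 \<in> B" using False by auto
      then have "dS S e0" using BS by auto
      then obtain a b where ab: "e0 = {a,b}" "a \<in> S" unfolding dS_def by blast
      have "a \<in> U" unfolding U_def using e0 ab by auto
      then have Une: "U \<noteq> {}" by auto
      have cl: "nxt S u \<in> U" if "u \<in> U" for u
      proof -
        have "earS S u \<in> B" using H that unfolding U_def by auto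
        moreover have "nxt S u \<in> S" using nxt_in[OF fin] that unfolding U_def by auto
        ultimately show ?thesis unfolding U_def earS_def by auto
      qed
      have US: "U \<subseteq> S" unfolding U_def by blast
      have "U = S" using closure_nxt[OF fin US Une cl] .
      then have allB: "earS S v \<in> B" if "v \<in> S" for v using H that unfolding U_def by blast
      have ne: "S \<noteq> {}" using c4 by auto
      have mM: "Min S \<noteq> Max S"
      proof
        assume eq: "Min S = Max S"
        have "x = Min S" if "x \<in> S" for x
        proof -
          have "Min S \<le> x" using Min_le[OF fin that] .
          moreover have "x \<le> Max S" using Max_ge[OF fin that] .
          ultimately show ?thesis using eq by simp
        qed
        then have "S \<subseteq> {Min S}" by blast
        then have "card S \<le> card {Min S}" by (rule card_mono[rotated]) simp
        then have "card S \<le> 1" by simp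
        then show False using c4 by auto
      qed
      have sub: "{Min S, Max S} \<subseteq> S" using Min_in[OF fin ne] Max_in[OF fin ne] by auto
      have "card (S - {Min S, Max S}) = card S - card {Min S, Max S}"
        using card_Diff_subset[OF _ sub] by simp
      then have "card (S - {Min S, Max S}) = card S - 2" using mM by simp
      moreover have "earS S ` (S - {Min S, Max S}) \<subseteq> B" using allB by blast
      then have "card (S - {Min S, Max S}) \<le> card B"
        using card_inj_on_le[OF ear_inj[OF fin] _ finB] by blast
      ultimately show False using cB by auto
    qed
  qed

  have L: "\<forall>S B. card S = m \<longrightarrow> finite S \<longrightarrow> 3 \<le> m \<longrightarrow> finite B \<longrightarrow> B \<subseteq> Collect (dS S)
     \<longrightarrow> card B + 3 \<le> m \<longrightarrow> (\<exists>T. triS S T \<and> T \<inter> B = {})"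
    for m
  proof (induction m)
    case 0
    then show ?case by auto
  next
    case (Suc m)
    show ?case
    proof (intro allI impI)
      fix S B assume cS: "card S = Suc m" and fin: "finite S" and m3: "3 \<le> Suc m" and finB: "finite B"
        and BS: "B \<subseteq> Collect (dS S)" and cB: "card B + 3 \<le> Suc m"
      show "\<exists>T. triS S T \<and> T \<inter> B = {}"
      proof (cases "Suc m = 3")
        case True
        have "\<not> dS S e" for e using dS_card[OF fin, of e] cS True by auto
        then have "triS S {}" unfolding triS_def by auto
        then show ?thesis by auto
      next
        case False
        then have c4: "4 \<le> card S" using cS m3 by auto
        obtain v where v: "v \<in> S" "earS S v \<notin> B" "B = {} \<or> (\<exists>e\<in>B. v \<in> e)"
          using choose_v[OF fin c4 BS finB] cS cB by auto
        define B' where "B' = {e\<in>B. v \<notin> e}"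
        have finB': "finite B'" using finB unfolding B'_def by auto
        have B'S: "B' \<subseteq> Collect (dS (S - {v}))"
        proof
          fix e assume "e \<in> B'"
          then have "e \<in> B" "v \<notin> e" unfolding B'_def by auto
          moreover have "e \<noteq> earS S v" using v calculation by auto
          ultimately show "e \<in> Collect (dS (S - {v}))" using dS_remove[OF fin v(1)] BS by auto
        qed
        have cS': "card (S - {v}) = m" using cS v fin by auto
        have cB': "card B' + 3 \<le> m"
        proof (cases "B = {}")
          case True then show ?thesis using B'_def c4 cS by auto
        next
          case False
          then obtain e0 where e0: "e0 \<in> B" "v \<in> e0" using v by auto
          then have "B' \<subseteq> B - {e0}" unfolding B'_def by auto
          then have "card B' \<le> card (B - {e0})" using finB by (simp add: card_mono)
          also have "\<dots> = card B - 1" using e0 finB by auto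
          finally show ?thesis using cB e0 finB card_gt_0_iff[of B] by auto
        qed
        obtain T' where T': "triS (S - {v}) T'" "T' \<inter> B' = {}"
          using Suc.IH[rule_format, of "S - {v}" B'] cS' fin finB' B'S cB' by auto
        have tri: "triS S (insert (earS S v) T')" using tri_extend[OF fin v(1) c4 T'(1)] .
        have "insert (earS S v) T' \<inter> B = {}"
        proof -
          have "t \<notin> B" if "t \<in> T'" for t
          proof
            assume tB: "t \<in> B"
            have "dS (S - {v}) t" using T'(1) that unfolding triS_def by auto
            then have "v \<notin> t" using dS_sub by blast
            then show False using tB that T'(2) unfolding B'_def by auto
          qed
          then show ?thesis using v by auto
        qed
        then show ?thesis using tri by blast
      qed
    qed
  qed

  have diag_ab: "dS {0..<n} {a,b}"
    if assms: "a < b" "b < n" "b \<noteq> (a+1) mod n" "a \<noteq> (b+1) mod n"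
    for a b n
  proof -
    have "(a+1) mod n = a+1" using assms by auto
    then have ab: "a+1 < b" using assms by auto
    have out: "\<exists>c\<in>{0..<n}. c < a \<or> b < c"
    proof (cases "a = 0")
      case True
      have "b \<noteq> n - 1"
      proof
        assume "b = n - 1"
        then have "b + 1 = n" using assms(2) by simp
        then have "(b+1) mod n = 0" by simp
        then show False using assms(4) True by simp
      qed
      then show ?thesis using assms by (intro bexI[of _ "n-1"]) auto
    next
      case False then show ?thesis using assms by (intro bexI[of _ 0]) auto
    qed
    show ?thesis unfolding dS_def using assms ab out by (intro exI[of _ a] exI[of _ b]) auto
  qed

  have dS_diag: "diagonal n e"
    if assms: "dS {0..<n} e"
    for n e
  proof -
    obtain a b c w where ab: "e = {a,b}" "a\<in>{0..<n}" "b\<in>{0..<n}" "a<b" and c: "a<c" "c<b"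
      and w: "w\<in>{0..<n}" "w<a \<or> b<w"
      using assms unfolding dS_def by blast
    have "(a+1) mod n = a+1" using ab c by auto
    then have 1: "b \<noteq> (a+1) mod n" using c by auto
    have 2: "a \<noteq> (b+1) mod n"
    proof (cases "b + 1 < n")
      case True then show ?thesis using ab by auto
    next
      case False
      then have "b + 1 = n" using ab by auto
      then have "(b+1) mod n = 0" by auto
      moreover have "a \<noteq> 0" using w \<open>b+1 = n\<close> by auto
      ultimately show ?thesis by auto
    qed
    show ?thesis unfolding diagonal_def using ab 1 2 by (intro exI[of _ a] exI[of _ b]) auto
  qed

  have diag_iff: "diagonal n e \<longleftrightarrow> dS {0..<n} e"
    for n e
  proof
    assume "diagonal n e"
    then obtain a b where ab: "e = {a,b}" "a < n" "b < n" "a \<noteq> b" "b \<noteq> (a + 1) mod n" "a \<noteq> (b + 1) mod n"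
      unfolding diagonal_def by blast
    show "dS {0..<n} e"
    proof (cases "a < b")
      case True
      have "dS {0..<n} {a,b}" by (rule diag_ab) (use ab True in auto)
      then show ?thesis using ab(1) by simp
    next
      case False then have "b < a" using ab by auto
      have "dS {0..<n} {b,a}" by (rule diag_ab) (use ab \<open>b < a\<close> in auto)
      then show ?thesis using ab(1) by (simp add: insert_commute)
    qed
  next
    assume "dS {0..<n} e" then show "diagonal n e" by (rule dS_diag)
  qed

  have tri_iff: "triangulation n T \<longleftrightarrow> triS {0..<n} T"
    for n T
    unfolding triangulation_def triS_def diag_iff ..

  have ear_eq: "ear_cover n i = earS {0..<n} i"
    if assms: "i < n" "3 \<le> n"
    for i n
  proof -
    have fin: "finite {0..<n}" by auto
    have p: "prv {0..<n} i = (i + n - 1) mod n"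
    proof (cases "i > 0")
      case True
      have x: "i - 1 \<in> {0..<n}" "i - 1 < i" using assms True by auto
      note P = prv_lt[OF fin x]
      have "i - 1 \<le> prv {0..<n} i" using P x by blast
      then have "prv {0..<n} i = i - 1" using P by linarith
      moreover have "(i + n - 1) mod n = i - 1"
      proof -
        have e1: "i + n - 1 = (i - 1) + n" using True by auto
        have "((i - 1) + n) mod n = (i - 1) mod n" by (rule mod_add_self2)
        moreover have "(i - 1) mod n = i - 1" using assms(1) by simp
        ultimately show ?thesis unfolding e1 by simp
      qed
      ultimately show ?thesis by simp
    next
      case False
      then have nx: "\<not> (\<exists>x\<in>{0..<n}. x < i)" by auto
      note P = prv_min[OF fin _ nx]
      have iS: "i \<in> {0..<n}" using assms by simp
      have m1: "n - 1 \<in> {0..<n}" using assms by simp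
      have "n - 1 \<le> prv {0..<n} i" "prv {0..<n} i \<in> {0..<n}" using P[OF iS] m1 by blast+
      then have "prv {0..<n} i = n - 1" by simp
      then show ?thesis using False assms by auto
    qed
    have q: "nxt {0..<n} i = (i + 1) mod n"
    proof (cases "i + 1 < n")
      case True
      have x: "i + 1 \<in> {0..<n}" "i < i + 1" using True by auto
      note N = nxt_gt[OF fin x]
      have "nxt {0..<n} i = i + 1" using N x by force
      then show ?thesis using True by simp
    next
      case False
      then have nx: "\<not> (\<exists>x\<in>{0..<n}. i < x)" by auto
      note N = nxt_max[OF fin _ nx]
      have iS: "i \<in> {0..<n}" using assms by simp
      have z: "0 \<in> {0..<n}" using assms by simp
      have "nxt {0..<n} i \<le> 0" using N[OF iS] z by blast
      then have "nxt {0..<n} i = 0" by simp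
      moreover have "i + 1 = n" using False assms by auto
      ultimately show ?thesis by simp
    qed
    show ?thesis unfolding ear_cover_def earS_def p q ..
  qed

  show ?thesis
  proof (rule ccontr)
    assume "\<not> deg B i \<le> 2"
    then have d3: "3 \<le> deg B i" by auto
    have bl: "blocker n B" and finB: "finite B" and cB: "card B = n - 1"
      using assms(2) unfolding nk_blocker_def saturated_blocker_def by auto
    have BS: "\<And>e. e \<in> B \<Longrightarrow> dS {0..<n} e" using bl unfolding blocker_def diag_iff by auto
    define S' where "S' = {0..<n} - {i}"
    define B' where "B' = {e\<in>B. i \<notin> e}"
    have ear: "earS {0..<n} i \<notin> B" using assms ear_eq by auto
    have fin: "finite {0..<n}" by auto
    have iS: "i \<in> {0..<n}" using assms by auto
    have split: "card B = card B' + deg B i"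
    proof -
      have u: "B = B' \<union> {e\<in>B. i \<in> e}" unfolding B'_def by blast
      have d: "B' \<inter> {e\<in>B. i \<in> e} = {}" unfolding B'_def by blast
      have f1: "finite B'" "finite {e\<in>B. i \<in> e}" using finB unfolding B'_def by simp_all
      have "card (B' \<union> {e\<in>B. i \<in> e}) = card B' + card {e\<in>B. i \<in> e}"
        using card_Un_disjoint[OF f1 d] .
      then show ?thesis unfolding deg_def using u by simp
    qed
    have cS': "card S' = n - 1" unfolding S'_def using assms by auto
    have cB': "card B' + 3 \<le> card S'" using split cB cS' d3 by auto
    have B'S: "B' \<subseteq> Collect (dS S')"
    proof
      fix e assume "e \<in> B'"
      then have "e \<in> B" "i \<notin> e" unfolding B'_def by auto
      moreover have "e \<noteq> earS {0..<n} i" using ear calculation by auto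
      ultimately show "e \<in> Collect (dS S')" unfolding S'_def using dS_remove[OF fin iS] BS by auto
    qed
    have finB': "finite B'" using finB unfolding B'_def by auto
    obtain T' where T': "triS S' T'" "T' \<inter> B' = {}"
      using L[of "card S'", rule_format, of S' B'] cS' cB' B'S finB' unfolding S'_def by auto
    have c4: "4 \<le> card {0..<n}" using cB' cS' by auto
    have tri: "triS {0..<n} (insert (earS {0..<n} i) T')"
      using tri_extend[OF fin iS c4] T'(1) unfolding S'_def by auto
    have "insert (earS {0..<n} i) T' \<inter> B = {}"
    proof -
      have "t \<notin> B" if "t \<in> T'" for t
      proof
        assume tB: "t \<in> B"
        have "dS S' t" using T'(1) that unfolding triS_def by auto
        then have "i \<notin> t" using dS_sub unfolding S'_def by blast
        then show False using tB that T'(2) unfolding B'_def by auto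
      qed
      then show ?thesis using ear by auto
    qed
    moreover have "triangulation n (insert (earS {0..<n} i) T')" using tri tri_iff by auto
    ultimately show False using bl unfolding blocker_def by auto
  qed
qed

end
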